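(* Let $L\subset\mathbb{R}^{2n}$ be a Lagrangian submanifold of the form $L=\{(q,\nabla F(q)):q\in\mathbb{R}^n\}$ for a cubic polynomial generating function $F:\mathbb{R}^n\to\mathbb{R}$. Then the outer symplectic billiard relation associated with $L$ is completely integrable: the $n$ functions $G_j(Q,P)=P_j-\frac{\partial F}{\partial Q_j}(Q)$, $j=1,\dots,n$, on $\mathbb{R}^{2n}$ pairwise Poisson commute and are invariant under the outer symplectic billiard relation, i.e. $G_j(A)=G_j(B)$ for all $j$ whenever $A,B\in\mathbb{R}^{2n}$ are in outer symplectic billiard relation with respect to $L$.
   Context: $\mathbb{R}^{2n}$ has coordinates $(Q,P)$, $Q,P\in\mathbb{R}^n$, and symplectic form $\omega=\sum_i dP_i\wedge dQ_i$. Two points $A,B\in\mathbb{R}^{2n}$ are in outer symplectic billiard relation with respect to $L$ if $X=\tfrac12(A+B)\in L$ and $B-A$ is symplectically orthogonal to $T_XL$; since $L$ is Lagrangian, this means $A=X+W$, $B=X-W$ for some $X\in L$, $W\in T_XL$. *)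

theory Defs
  imports "HOL-Analysis.Analysis"
begin

text \<open>R^n is real^'n; R^{2n} is (real^'n) \<times> (real^'n) with coordinates (Q,P).\<close>

definition cubic_poly :: "(real^'n \<Rightarrow> real) \<Rightarrow> bool" where
  "cubic_poly F \<longleftrightarrow> (\<exists>c b a t. \<forall>q.
     F q = c + (\<Sum>i\<in>UNIV. b i * q$i)
             + (\<Sum>i\<in>UNIV. \<Sum>j\<in>UNIV. a i j * q$i * q$j)
             + (\<Sum>i\<in>UNIV. \<Sum>j\<in>UNIV. \<Sum>k\<in>UNIV. t i j k * q$i * q$j * q$k))"

definition grad :: "(real^'n \<Rightarrow> real) \<Rightarrow> real^'n \<Rightarrow> real^'n" where
  "grad F q = (\<chi> j. frechet_derivative F (at q) (axis j 1))"

definition Lgraph :: "(real^'n \<Rightarrow> real) \<Rightarrow> ((real^'n) \<times> (real^'n)) set" where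
  "Lgraph F = {(q, grad F q) | q. True}"

definition tangent_space :: "(real^'n \<Rightarrow> real) \<Rightarrow> (real^'n) \<times> (real^'n) \<Rightarrow> ((real^'n) \<times> (real^'n)) set" where
  "tangent_space F X = range (frechet_derivative (\<lambda>q. (q, grad F q)) (at (fst X)))"

definition symp_form :: "(real^'n) \<times> (real^'n) \<Rightarrow> (real^'n) \<times> (real^'n) \<Rightarrow> real" where
  "symp_form u v = snd u \<bullet> fst v - snd v \<bullet> fst u"

definition outer_billiard_rel :: "(real^'n \<Rightarrow> real) \<Rightarrow> (real^'n) \<times> (real^'n) \<Rightarrow> (real^'n) \<times> (real^'n) \<Rightarrow> bool" where
  "outer_billiard_rel F A B \<longleftrightarrow>
     (let X = (1/2) *\<^sub>R (A + B) in
       X \<in> Lgraph F \<and> (\<forall>v\<in>tangent_space F X. symp_form (B - A) v = 0))"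

definition partial_Q :: "((real^'n) \<times> (real^'n) \<Rightarrow> real) \<Rightarrow> (real^'n) \<times> (real^'n) \<Rightarrow> 'n \<Rightarrow> real" where
  "partial_Q G x i = frechet_derivative G (at x) (axis i 1, 0)"

definition partial_P :: "((real^'n) \<times> (real^'n) \<Rightarrow> real) \<Rightarrow> (real^'n) \<times> (real^'n) \<Rightarrow> 'n \<Rightarrow> real" where
  "partial_P G x i = frechet_derivative G (at x) (0, axis i 1)"

definition poisson :: "((real^'n) \<times> (real^'n) \<Rightarrow> real) \<Rightarrow> ((real^'n) \<times> (real^'n) \<Rightarrow> real) \<Rightarrow> (real^'n) \<times> (real^'n) \<Rightarrow> real" where
  "poisson G H x = (\<Sum>i\<in>UNIV. partial_P G x i * partial_Q H x i - partial_Q G x i * partial_P H x i)"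

end

theory Submission
  imports Defs
begin


lemma hd_vec_nth[derivative_intros]: "((\<lambda>x. x$i) has_derivative (\<lambda>x. x$i)) F"
  by (rule bounded_linear_imp_has_derivative[OF bounded_linear_vec_nth])

lemma hd_vec_nth'[derivative_intros]: "(f has_derivative f') F \<Longrightarrow> ((\<lambda>x. f x $ i) has_derivative (\<lambda>x. f' x $ i)) F"
  by (rule bounded_linear.has_derivative[OF bounded_linear_vec_nth])

lemma sum_axis2: "(\<Sum>k\<in>UNIV. (axis k (1::real)) $ i * f k) = f i"
proof -
  have "(\<Sum>k\<in>UNIV. (axis k (1::real)) $ i * f k) = (\<Sum>k\<in>UNIV. if i = k then f k else 0)"
    by (rule sum.cong) (auto simp: axis_def)
  then show ?thesis by simp
qed

lemma sum_axis3: "(\<Sum>k\<in>UNIV. f k * (axis k (1::real)) $ i) = f i"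
  using sum_axis2[of i f] by (simp add: mult.commute)

lemma chi_sum: "(\<chi> i. f i) = (\<Sum>j\<in>UNIV. f j *\<^sub>R axis j (1::real))"
  by (subst sum_eq) (simp add: vec_eq_iff sum_axis3)

lemma sum_axis: "(\<Sum>k\<in>UNIV. (axis i (1::real)) $ k * f k) = f i"
proof -
  have "(\<Sum>k\<in>UNIV. (axis i (1::real)) $ k * f k) = (\<Sum>k\<in>UNIV. if k = i then f k else 0)"
    by (rule sum.cong) (auto simp: axis_def)
  then show ?thesis by simp
qed

lemma sum_axis4: "(\<Sum>k\<in>UNIV. f k * (axis i (1::real)) $ k) = f i"
  using sum_axis[of i f] by (simp add: mult.commute)

lemma half1: "(x::real) + y = g * 2 \<Longrightarrow> x = g - (y - x) / 2"
  by (simp add: field_simps)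
lemma half2: "(x::real) + y = g * 2 \<Longrightarrow> y = g + (y - x) / 2"
  by (simp add: field_simps)

lemma bil_swap:
  fixes M :: "'n::finite \<Rightarrow> 'n \<Rightarrow> real"
  assumes "\<And>j k. M j k = M k j"
  shows "(\<Sum>j\<in>UNIV. d j * (\<Sum>k\<in>UNIV. v k * M j k)) = (\<Sum>j\<in>UNIV. v j * (\<Sum>k\<in>UNIV. d k * M j k))"
proof -
  have "(\<Sum>j\<in>UNIV. d j * (\<Sum>k\<in>UNIV. v k * M j k)) = (\<Sum>j\<in>UNIV. \<Sum>k\<in>UNIV. d j * v k * M j k)"
    by (simp add: sum_distrib_left mult_ac)
  also have "\<dots> = (\<Sum>k\<in>UNIV. \<Sum>j\<in>UNIV. d j * v k * M j k)" by (rule sum.swap)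
  also have "\<dots> = (\<Sum>j\<in>UNIV. v j * (\<Sum>k\<in>UNIV. d k * M j k))"
    by (simp add: sum_distrib_left mult_ac assms)
  finally show ?thesis .
qed

locale symcub =
  fixes F :: "real^'n \<Rightarrow> real" and c :: real and b :: "'n \<Rightarrow> real"
    and a :: "'n \<Rightarrow> 'n \<Rightarrow> real" and t :: "'n \<Rightarrow> 'n \<Rightarrow> 'n \<Rightarrow> real"
  assumes F_eq: "\<And>q. F q = c + (\<Sum>i\<in>UNIV. b i * q$i)
             + (\<Sum>i\<in>UNIV. \<Sum>j\<in>UNIV. a i j * q$i * q$j)
             + (\<Sum>i\<in>UNIV. \<Sum>j\<in>UNIV. \<Sum>k\<in>UNIV. t i j k * q$i * q$j * q$k)"
    and asym: "\<And>i j. a i j = a j i"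
    and ts1: "\<And>i j k. t i j k = t j i k"
    and ts2: "\<And>i j k. t i j k = t i k j"
begin

definition gj :: "real^'n \<Rightarrow> 'n \<Rightarrow> real" where
  "gj q j = b j + 2 * (\<Sum>k\<in>UNIV. q$k * a j k) + 3 * (\<Sum>k\<in>UNIV. \<Sum>l\<in>UNIV. t j k l * q$k * q$l)"

definition M :: "real^'n \<Rightarrow> 'n \<Rightarrow> 'n \<Rightarrow> real" where
  "M q j k = 2 * a j k + 6 * (\<Sum>l\<in>UNIV. t j k l * q$l)"

definition H :: "real^'n \<Rightarrow> real^'n \<Rightarrow> 'n \<Rightarrow> real" where
  "H q h j = (\<Sum>k\<in>UNIV. h$k * M q j k)"

lemma Msym: "M q j k = M q k j"
  unfolding M_def by (simp add: asym ts1[of j k])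

lemma t3: "t j k i = t i j k"
  by (metis ts1 ts2)

lemma eqA: "(\<Sum>i\<in>UNIV. \<Sum>j\<in>UNIV. a i j * (q$i * h$j)) = (\<Sum>i\<in>UNIV. \<Sum>j\<in>UNIV. a i j * (h$i * q$j))"
  by (subst sum.swap) (simp add: asym mult_ac)

lemma eqB: "(\<Sum>i\<in>UNIV. \<Sum>j\<in>UNIV. \<Sum>k\<in>UNIV. t i j k * (q$i * h$j * q$k)) = (\<Sum>i\<in>UNIV. \<Sum>j\<in>UNIV. \<Sum>k\<in>UNIV. t i j k * (h$i * q$j * q$k))"
  by (subst sum.swap) (simp add: ts1[of _ _] mult_ac)

lemma eqC: "(\<Sum>i\<in>UNIV. \<Sum>j\<in>UNIV. \<Sum>k\<in>UNIV. t i j k * (q$i * q$j * h$k)) = (\<Sum>i\<in>UNIV. \<Sum>j\<in>UNIV. \<Sum>k\<in>UNIV. t i j k * (h$i * q$j * q$k))"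
proof -
  have "(\<Sum>i\<in>UNIV. \<Sum>j\<in>UNIV. \<Sum>k\<in>UNIV. t i j k * (q$i * q$j * h$k)) = (\<Sum>i\<in>UNIV. \<Sum>k\<in>UNIV. \<Sum>j\<in>UNIV. t i j k * (q$i * q$j * h$k))"
    by (rule sum.cong[OF refl], rule sum.swap)
  also have "\<dots> = (\<Sum>k\<in>UNIV. \<Sum>i\<in>UNIV. \<Sum>j\<in>UNIV. t i j k * (q$i * q$j * h$k))"
    by (rule sum.swap)
  also have "\<dots> = (\<Sum>i\<in>UNIV. \<Sum>j\<in>UNIV. \<Sum>k\<in>UNIV. t i j k * (h$i * q$j * q$k))"
    by (simp add: t3 mult_ac)
  finally show ?thesis .
qed

lemma F_deriv: "(F has_derivative (\<lambda>h. \<Sum>i\<in>UNIV. h$i * gj q i)) (at q)"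
proof -
  have F': "F = (\<lambda>q. c + (\<Sum>i\<in>UNIV. b i * q$i)
             + (\<Sum>i\<in>UNIV. \<Sum>j\<in>UNIV. a i j * q$i * q$j)
             + (\<Sum>i\<in>UNIV. \<Sum>j\<in>UNIV. \<Sum>k\<in>UNIV. t i j k * q$i * q$j * q$k))"
    using F_eq by auto
  have D: "(F has_derivative
   (\<lambda>h. (\<Sum>i\<in>UNIV. b i * h$i)
             + (\<Sum>i\<in>UNIV. \<Sum>j\<in>UNIV. a i j * (h$i * q$j + q$i * h$j))
             + (\<Sum>i\<in>UNIV. \<Sum>j\<in>UNIV. \<Sum>k\<in>UNIV. t i j k * (h$i * q$j * q$k + q$i * h$j * q$k + q$i * q$j * h$k)))) (at q)"
    unfolding F'
    apply (rule has_derivative_eq_rhs)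
     apply (intro derivative_eq_intros)
          apply (rule refl)+
    apply (simp add: algebra_simps)
    done
  show ?thesis
  proof (rule has_derivative_eq_rhs[OF D], rule ext)
    fix h :: "real^'n"
    have e1: "(\<Sum>i\<in>UNIV. \<Sum>j\<in>UNIV. a i j * (h$i * q$j + q$i * h$j)) = 2 * (\<Sum>i\<in>UNIV. \<Sum>j\<in>UNIV. a i j * (h$i * q$j))"
      using eqA[of q h] by (simp add: distrib_left sum.distrib)
    have e2: "(\<Sum>i\<in>UNIV. \<Sum>j\<in>UNIV. \<Sum>k\<in>UNIV. t i j k * (h$i * q$j * q$k + q$i * h$j * q$k + q$i * q$j * h$k)) = 3 * (\<Sum>i\<in>UNIV. \<Sum>j\<in>UNIV. \<Sum>k\<in>UNIV. t i j k * (h$i * q$j * q$k))"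
      using eqB[of q h] eqC[of q h] by (simp add: distrib_left sum.distrib)
    show "(\<Sum>i\<in>UNIV. b i * h$i)
             + (\<Sum>i\<in>UNIV. \<Sum>j\<in>UNIV. a i j * (h$i * q$j + q$i * h$j))
             + (\<Sum>i\<in>UNIV. \<Sum>j\<in>UNIV. \<Sum>k\<in>UNIV. t i j k * (h$i * q$j * q$k + q$i * h$j * q$k + q$i * q$j * h$k)) = (\<Sum>i\<in>UNIV. h$i * gj q i)"
      unfolding e1 e2 gj_def
      by (simp add: distrib_left sum.distrib sum_distrib_left mult_ac)
  qed
qed

lemma grad_eq: "grad F q = (\<chi> j. gj q j)"
proof -
  have "frechet_derivative F (at q) = (\<lambda>h. \<Sum>i\<in>UNIV. h$i * gj q i)"
    using frechet_derivative_at[OF F_deriv] by simp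
  then show ?thesis unfolding grad_def by (simp add: sum_axis)
qed

lemma eqD: "(\<Sum>k\<in>UNIV. \<Sum>l\<in>UNIV. t j k l * (q$k * h$l)) = (\<Sum>k\<in>UNIV. \<Sum>l\<in>UNIV. t j k l * (h$k * q$l))"
  by (subst sum.swap) (simp add: ts2[of j] mult_ac)

lemma gj_deriv: "((\<lambda>q. gj q j) has_derivative (\<lambda>h. H q h j)) (at q)"
proof -
  have G': "(\<lambda>q. gj q j) = (\<lambda>q. b j + 2 * (\<Sum>k\<in>UNIV. q$k * a j k) + 3 * (\<Sum>k\<in>UNIV. \<Sum>l\<in>UNIV. t j k l * q$k * q$l))"
    unfolding gj_def by simp
  have D: "((\<lambda>q. gj q j) has_derivative (\<lambda>h. 2 * (\<Sum>k\<in>UNIV. h$k * a j k) + 3 * (\<Sum>k\<in>UNIV. \<Sum>l\<in>UNIV. t j k l * (h$k * q$l + q$k * h$l)))) (at q)"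
    unfolding G'
    apply (rule has_derivative_eq_rhs)
     apply (intro derivative_eq_intros)
          apply (rule refl)+
    apply (simp add: algebra_simps)
    done
  show ?thesis
  proof (rule has_derivative_eq_rhs[OF D], rule ext)
    fix h :: "real^'n"
    have e: "(\<Sum>k\<in>UNIV. \<Sum>l\<in>UNIV. t j k l * (h$k * q$l + q$k * h$l)) = 2 * (\<Sum>k\<in>UNIV. \<Sum>l\<in>UNIV. t j k l * (h$k * q$l))"
      using eqD[of j q h] by (simp add: distrib_left sum.distrib)
    show "2 * (\<Sum>k\<in>UNIV. h$k * a j k) + 3 * (\<Sum>k\<in>UNIV. \<Sum>l\<in>UNIV. t j k l * (h$k * q$l + q$k * h$l)) = H q h j"
      unfolding e H_def M_def
      by (simp add: distrib_left sum.distrib sum_distrib_left mult_ac)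
  qed
qed

lemma gj_diff: "gj (q + w) j - gj (q - w) j = 2 * H q w j"
proof -
  have e1: "(\<Sum>k\<in>UNIV. (q+w)$k * a j k) - (\<Sum>k\<in>UNIV. (q-w)$k * a j k) = 2 * (\<Sum>k\<in>UNIV. w$k * a j k)"
    by (simp add: sum_subtractf[symmetric] sum_distrib_left algebra_simps)
  have e2: "(\<Sum>k\<in>UNIV. \<Sum>l\<in>UNIV. t j k l * (q+w)$k * (q+w)$l) - (\<Sum>k\<in>UNIV. \<Sum>l\<in>UNIV. t j k l * (q-w)$k * (q-w)$l)
     = 2 * (\<Sum>k\<in>UNIV. \<Sum>l\<in>UNIV. t j k l * (w$k * q$l)) + 2 * (\<Sum>k\<in>UNIV. \<Sum>l\<in>UNIV. t j k l * (q$k * w$l))"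
    by (simp add: sum_subtractf[symmetric] sum_distrib_left sum.distrib[symmetric] algebra_simps)
  have e3: "2 * H q w j = 4 * (\<Sum>k\<in>UNIV. w$k * a j k) + 12 * (\<Sum>k\<in>UNIV. \<Sum>l\<in>UNIV. t j k l * (w$k * q$l))"
    unfolding H_def M_def by (simp add: distrib_left sum.distrib sum_distrib_left mult_ac)
  have "gj (q + w) j - gj (q - w) j = 2 * ((\<Sum>k\<in>UNIV. (q+w)$k * a j k) - (\<Sum>k\<in>UNIV. (q-w)$k * a j k))
     + 3 * ((\<Sum>k\<in>UNIV. \<Sum>l\<in>UNIV. t j k l * (q+w)$k * (q+w)$l) - (\<Sum>k\<in>UNIV. \<Sum>l\<in>UNIV. t j k l * (q-w)$k * (q-w)$l))"
    unfolding gj_def by (simp add: algebra_simps)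
  also have "\<dots> = 2 * H q w j"
    unfolding e1 e2 e3 eqD[of j q w] by simp
  finally show ?thesis .
qed

lemma H_scale: "H q (r *\<^sub>R h) j = r * H q h j"
  unfolding H_def by (simp add: sum_distrib_left mult_ac)

lemma H_zero: "H q 0 j = 0"
  unfolding H_def by simp

lemma H_axis: "H q (axis i 1) j = M q j i"
  unfolding H_def by (simp add: sum_axis)


lemma gj_deriv'[derivative_intros]:
  "(f has_derivative f') (at x) \<Longrightarrow> ((\<lambda>y. gj (f y) j) has_derivative (\<lambda>h. H (f x) (f' h) j)) (at x)"
  using diff_chain_at[of f f' x "\<lambda>q. gj q j", OF _ gj_deriv] by (simp add: o_def)

lemma G_eq: "(\<lambda>(Q::real^'n, P::real^'n). P$j - grad F Q $ j) = (\<lambda>x. snd x $ j - gj (fst x) j)"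
  by (auto simp: grad_eq)

lemma G_deriv: "((\<lambda>x. snd x $ j - gj (fst x) j) has_derivative (\<lambda>h. snd h $ j - H (fst x) (fst h) j)) (at x)"
  by (auto intro!: derivative_eq_intros)

lemma poisson_zero:
  "poisson (\<lambda>(Q::real^'n, P::real^'n). P$i - grad F Q $ i) (\<lambda>(Q::real^'n, P::real^'n). P$j - grad F Q $ j) x = 0"
proof -
  have fd: "frechet_derivative (\<lambda>(Q::real^'n, P::real^'n). P$j - grad F Q $ j) (at x) = (\<lambda>h. snd h $ j - H (fst x) (fst h) j)" for j
    unfolding G_eq using frechet_derivative_at[OF G_deriv] by simp
  have pP: "partial_P (\<lambda>(Q::real^'n, P::real^'n). P$j - grad F Q $ j) x k = axis k 1 $ j" for j k
    unfolding partial_P_def fd by (simp add: H_zero)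
  have pQ: "partial_Q (\<lambda>(Q::real^'n, P::real^'n). P$j - grad F Q $ j) x k = - M (fst x) j k" for j k
    unfolding partial_Q_def fd by (simp add: H_axis)
  have "poisson (\<lambda>(Q::real^'n, P::real^'n). P$i - grad F Q $ i) (\<lambda>(Q::real^'n, P::real^'n). P$j - grad F Q $ j) x
     = (\<Sum>k\<in>UNIV. axis k 1 $ i * (- M (fst x) j k)) - (\<Sum>k\<in>UNIV. (- M (fst x) i k) * axis k 1 $ j)"
    unfolding poisson_def pP pQ by (simp only: sum_subtractf)
  also have "\<dots> = (- M (fst x) j i) - (- M (fst x) i j)" by (simp only: sum_axis2 sum_axis3)
  also have "\<dots> = 0" by (simp add: Msym)
  finally show ?thesis .
qed

lemma emb_deriv: "((\<lambda>q. (q, grad F q)) has_derivative (\<lambda>h. (h, \<chi> j. H q h j))) (at q)"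
proof -
  have e: "(\<lambda>q. (q, grad F q)) = (\<lambda>q. (q, \<Sum>j\<in>UNIV. gj q j *\<^sub>R axis j (1::real)))"
    by (simp add: grad_eq chi_sum)
  show ?thesis unfolding e chi_sum[of "\<lambda>j. H q _ j"]
    by (auto intro!: derivative_eq_intros)
qed

lemma billiard_inv:
  assumes "outer_billiard_rel F A B"
  shows "(\<lambda>(Q::real^'n, P::real^'n). P$j - grad F Q $ j) A = (\<lambda>(Q::real^'n, P::real^'n). P$j - grad F Q $ j) B"
proof -
  define X where "X = (1/2) *\<^sub>R (A + B)"
  have XL: "X \<in> Lgraph F" and orth: "\<forall>v\<in>tangent_space F X. symp_form (B - A) v = 0"
    using assms unfolding outer_billiard_rel_def X_def Let_def by auto
  obtain q where Xq: "X = (q, grad F q)" using XL unfolding Lgraph_def by auto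
  define d where "d = B - A"
  have ts: "tangent_space F X = range (\<lambda>h. (h, \<chi> j. H q h j))"
    unfolding tangent_space_def Xq by (simp add: frechet_derivative_at[OF emb_deriv[of q], symmetric])
  have sd: "snd d $ i = H q (fst d) i" for i
  proof -
    have "symp_form d (axis i 1, \<chi> j. H q (axis i 1) j) = 0"
      using orth ts d_def by auto
    then have "snd d $ i = (\<Sum>j\<in>UNIV. M q j i * fst d $ j)"
      unfolding symp_form_def by (simp add: inner_vec_def H_axis sum_axis4)
    also have "\<dots> = H q (fst d) i"
      unfolding H_def by (simp add: Msym mult.commute)
    finally show ?thesis .
  qed
  define w where "w = (1/2) *\<^sub>R fst d"
  have c1: "fst A = q - w" "fst B = q + w"
    using arg_cong[OF Xq, of fst] unfolding X_def w_def d_def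
    by (simp_all add: vec_eq_iff algebra_simps) (metis (no_types, lifting) add_diff_cancel_right' field_sum_of_halves add.commute add.left_commute)+
  have c2: "snd A $ j = grad F q $ j - snd d $ j / 2" "snd B $ j = grad F q $ j + snd d $ j / 2"
    using arg_cong[OF Xq, of "\<lambda>x. snd x $ j"] unfolding X_def d_def
    apply (simp_all) by (simp_all add: half1 half2)
  have "2 * H q w j = H q (fst d) j"
    unfolding w_def H_scale by simp
  then have key: "gj (q + w) j - gj (q - w) j = snd d $ j"
    using gj_diff[of q w j] sd[of j] by simp
  have "snd A $ j - gj (fst A) j = snd B $ j - gj (fst B) j"
    unfolding c1 using c2 key by (simp add: grad_eq)
  then show ?thesis unfolding G_eq by simp
qed

end


lemma sw12: "(\<Sum>i\<in>UNIV. \<Sum>j\<in>UNIV. \<Sum>k\<in>UNIV. f j i k * ((q::real^'n)$i*q$j*q$k)) = (\<Sum>i\<in>UNIV. \<Sum>j\<in>UNIV. \<Sum>k\<in>UNIV. f i j k * (q$i*q$j*q$k))"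
  by (subst sum.swap) (simp add: mult_ac)

lemma sw23: "(\<Sum>i\<in>UNIV. \<Sum>j\<in>UNIV. \<Sum>k\<in>UNIV. f i k j * ((q::real^'n)$i*q$j*q$k)) = (\<Sum>i\<in>UNIV. \<Sum>j\<in>UNIV. \<Sum>k\<in>UNIV. f i j k * (q$i*q$j*q$k))"
  by (rule sum.cong[OF refl], subst sum.swap) (simp add: mult_ac)

lemma symmetrize:
  fixes F :: "real^'n \<Rightarrow> real"
  assumes "cubic_poly F"
  shows "\<exists>c b a t. symcub F c b a t"
proof -
  obtain c b a t where Fe: "\<And>q. F q = c + (\<Sum>i\<in>UNIV. b i * q$i)
             + (\<Sum>i\<in>UNIV. \<Sum>j\<in>UNIV. a i j * q$i * q$j)
             + (\<Sum>i\<in>UNIV. \<Sum>j\<in>UNIV. \<Sum>k\<in>UNIV. t i j k * q$i * q$j * q$k)"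
    using assms unfolding cubic_poly_def by blast
  define as where "as i j = (a i j + a j i) / 2" for i j
  define ts where "ts i j k = (t i j k + t i k j + t j i k + t j k i + t k i j + t k j i) / 6" for i j k
  have A: "(\<Sum>i\<in>UNIV. \<Sum>j\<in>UNIV. as i j * q$i * q$j) = (\<Sum>i\<in>UNIV. \<Sum>j\<in>UNIV. a i j * q$i * q$j)" for q :: "real^'n"
  proof -
    have s: "(\<Sum>i\<in>UNIV. \<Sum>j\<in>UNIV. a j i * q$i * q$j) = (\<Sum>i\<in>UNIV. \<Sum>j\<in>UNIV. a i j * q$i * q$j)"
      by (subst sum.swap) (simp add: mult_ac)
    show ?thesis unfolding as_def using s
      by (simp add: add_divide_distrib distrib_right sum.distrib sum_divide_distrib[symmetric])
  qed
  have T: "(\<Sum>i\<in>UNIV. \<Sum>j\<in>UNIV. \<Sum>k\<in>UNIV. ts i j k * q$i * q$j * q$k) = (\<Sum>i\<in>UNIV. \<Sum>j\<in>UNIV. \<Sum>k\<in>UNIV. t i j k * q$i * q$j * q$k)" for q :: "real^'n"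
  proof -
    let ?S = "\<lambda>f. (\<Sum>i\<in>UNIV. \<Sum>j\<in>UNIV. \<Sum>k\<in>UNIV. f i j k * (q$i*q$j*q$k))"
    have p1: "?S (\<lambda>i j k. t i k j) = ?S t" by (rule sw23)
    have p2: "?S (\<lambda>i j k. t j i k) = ?S t" by (rule sw12)
    have p3: "?S (\<lambda>i j k. t j k i) = ?S t"
      using sw12[of "\<lambda>x y z. t x z y" q] sw23[of t q] by simp
    have p4: "?S (\<lambda>i j k. t k i j) = ?S t"
      using sw23[of "\<lambda>x y z. t y x z" q] sw12[of t q] by simp
    have p5: "?S (\<lambda>i j k. t k j i) = ?S t"
      using sw23[of "\<lambda>x y z. t y z x" q] p3 by simp
    have "?S ts = (?S (\<lambda>i j k. t i j k) + ?S (\<lambda>i j k. t i k j) + ?S (\<lambda>i j k. t j i k) + ?S (\<lambda>i j k. t j k i) + ?S (\<lambda>i j k. t k i j) + ?S (\<lambda>i j k. t k j i)) / 6"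
      unfolding ts_def by (simp add: add_divide_distrib distrib_right sum.distrib sum_divide_distrib[symmetric])
    also have "\<dots> = ?S t" unfolding p1 p2 p3 p4 p5 by simp
    finally show ?thesis by (simp add: mult_ac)
  qed
  have "symcub F c b as ts"
  proof
    show "F q = c + (\<Sum>i\<in>UNIV. b i * q$i)
             + (\<Sum>i\<in>UNIV. \<Sum>j\<in>UNIV. as i j * q$i * q$j)
             + (\<Sum>i\<in>UNIV. \<Sum>j\<in>UNIV. \<Sum>k\<in>UNIV. ts i j k * q$i * q$j * q$k)" for q
      unfolding A T Fe ..
    show "as i j = as j i" for i j unfolding as_def by simp
    show "ts i j k = ts j i k" for i j k unfolding ts_def by simp
    show "ts i j k = ts i k j" for i j k unfolding ts_def by simp
  qed
  then show ?thesis by blast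
qed

theorem mainTheorem5:
  fixes F :: "real^'n \<Rightarrow> real"
  assumes "cubic_poly F"
  defines "G \<equiv> (\<lambda>j::'n. \<lambda>(Q::real^'n, P::real^'n). P$j - grad F Q $ j)"
  shows "(\<forall>i j x. poisson (G i) (G j) x = 0) \<and>
         (\<forall>A B. outer_billiard_rel F A B \<longrightarrow> (\<forall>j. G j A = G j B))"
proof -
  obtain c b a t where S: "symcub F c b a t" using symmetrize[OF assms(1)] by blast
  show ?thesis unfolding G_def
    using symcub.poisson_zero[OF S] symcub.billiard_inv[OF S] by blast
qed
end
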